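(* Let $\mathcal{H}$ be a nonzero Hilbert space, $n\ge 2$, and $i,j,k\in\{1,\dots,n\}$ with $j\neq i$ and $j\neq k$. Then in $\mathcal{C}(\mathcal{H}^{\otimes n})$, $$D_{i,k}=\exists_{\mathcal{H}_j}(D_{i,j}\cap D_{j,k}).$$
   Context: $\mathcal{H}^{\otimes n}=\mathcal{H}_1\otimes\cdots\otimes\mathcal{H}_n$ with each $\mathcal{H}_m=\mathcal{H}$; $\mathcal{C}(\cdot)$ is the lattice of closed subspaces. Fix an orthonormal basis $(a_i)_{i\in I}$ of $\mathcal{H}$; every $v\in\mathcal{H}^{\otimes n}$ is uniquely $\sum_{\alpha\in I^n}\lambda_\alpha\,a_{\alpha(1)}\otimes\cdots\otimes a_{\alpha(n)}$. For $F\subseteq\{1,\dots,n\}$ let $\mathrm{Perm}_n(F)$ be the permutations of $\{1,\dots,n\}$ fixing every element outside $F$, and $D_F$ the closed subspace of all such $v$ with $\lambda_\alpha=\lambda_{\alpha\sigma}$ for all $\sigma\in\mathrm{Perm}_n(F)$ and all $\alpha$, where $\alpha\sigma=(\alpha(\sigma(1)),\dots,\alpha(\sigma(n)))$ (this is independent of the basis). $D_{i,j}=D_{\{i,j\}}$; so $D_{i,i}=\mathcal{H}^{\otimes n}$. $\exists_{\mathcal{H}_j}S$ is the smallest closed subspace containing $S$ of the form "$\mathcal{H}$ in the $j$-th factor tensored with a closed subspace $T$ of the tensor product of the remaining $n-1$ factors" (via the canonical reordering isomorphism). *)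

theory Defs
  imports "HOL-Analysis.Analysis" "HOL-Combinatorics.Permutations"
begin

text \<open>The Hilbert space H is represented concretely as l2(I) over the complex numbers,
  where the index type 'i is (the index set of) the fixed orthonormal basis (a_i).
  A vector of H^{tensor n} is its coefficient family (lambda_alpha) indexed by
  alpha in I^n; tuples alpha are extensional functions on {1..n}.\<close>

definition tuples :: "nat \<Rightarrow> (nat \<Rightarrow> 'i) set" where
  "tuples n = PiE {1..n} (\<lambda>_. UNIV)"

definition tensor_space :: "nat \<Rightarrow> ((nat \<Rightarrow> 'i) \<Rightarrow> complex) set" where
  "tensor_space n = {v. (\<forall>\<alpha>. \<alpha> \<notin> tuples n \<longrightarrow> v \<alpha> = 0) \<and>
                        (\<lambda>\<alpha>. (cmod (v \<alpha>))\<^sup>2) summable_on tuples n}"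

definition tnorm :: "nat \<Rightarrow> ((nat \<Rightarrow> 'i) \<Rightarrow> complex) \<Rightarrow> real" where
  "tnorm n v = sqrt (infsum (\<lambda>\<alpha>. (cmod (v \<alpha>))\<^sup>2) (tuples n))"

definition closed_subspace :: "nat \<Rightarrow> ((nat \<Rightarrow> 'i) \<Rightarrow> complex) set \<Rightarrow> bool" where
  "closed_subspace n S \<longleftrightarrow> S \<subseteq> tensor_space n \<and> (\<lambda>_. 0) \<in> S \<and>
     (\<forall>v\<in>S. \<forall>w\<in>S. (\<lambda>\<alpha>. v \<alpha> + w \<alpha>) \<in> S) \<and>
     (\<forall>c. \<forall>v\<in>S. (\<lambda>\<alpha>. c * v \<alpha>) \<in> S) \<and>
     (\<forall>f v. (\<forall>k. f k \<in> S) \<longrightarrow> v \<in> tensor_space n \<longrightarrow>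
        (\<lambda>k. tnorm n (\<lambda>\<alpha>. f k \<alpha> - v \<alpha>)) \<longlonglongrightarrow> 0 \<longrightarrow> v \<in> S)"

definition Perm_n :: "nat \<Rightarrow> nat set \<Rightarrow> (nat \<Rightarrow> nat) set" where
  "Perm_n n F = {\<sigma>. \<sigma> permutes {1..n} \<and> (\<forall>m\<in>{1..n} - F. \<sigma> m = m)}"

definition D_sym :: "nat \<Rightarrow> nat set \<Rightarrow> ((nat \<Rightarrow> 'i) \<Rightarrow> complex) set" where
  "D_sym n F = {v \<in> tensor_space n. \<forall>\<sigma>\<in>Perm_n n F. \<forall>\<alpha>\<in>tuples n. v \<alpha> = v (\<alpha> \<circ> \<sigma>)}"

definition D2 :: "nat \<Rightarrow> nat \<Rightarrow> nat \<Rightarrow> ((nat \<Rightarrow> 'i) \<Rightarrow> complex) set" where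
  "D2 n i j = D_sym n {i, j}"

definition drop_coord :: "nat \<Rightarrow> nat \<Rightarrow> (nat \<Rightarrow> 'i) \<Rightarrow> (nat \<Rightarrow> 'i)" where
  "drop_coord n j \<alpha> = (\<lambda>m. if m \<in> {1..n-1} then (if m < j then \<alpha> m else \<alpha> (Suc m)) else undefined)"

definition tensor_at :: "nat \<Rightarrow> nat \<Rightarrow> ('i \<Rightarrow> complex) \<Rightarrow> ((nat \<Rightarrow> 'i) \<Rightarrow> complex)
     \<Rightarrow> ((nat \<Rightarrow> 'i) \<Rightarrow> complex)" where
  "tensor_at n j x w = (\<lambda>\<alpha>. if \<alpha> \<in> tuples n then x (\<alpha> j) * w (drop_coord n j \<alpha>) else 0)"

definition l2_space :: "('i \<Rightarrow> complex) set" where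
  "l2_space = {x. (\<lambda>a. (cmod (x a))\<^sup>2) summable_on UNIV}"

definition closed_span :: "nat \<Rightarrow> ((nat \<Rightarrow> 'i) \<Rightarrow> complex) set \<Rightarrow> ((nat \<Rightarrow> 'i) \<Rightarrow> complex) set" where
  "closed_span n A = \<Inter>{S. closed_subspace n S \<and> A \<subseteq> S}"

definition cyl :: "nat \<Rightarrow> nat \<Rightarrow> ((nat \<Rightarrow> 'i) \<Rightarrow> complex) set \<Rightarrow> ((nat \<Rightarrow> 'i) \<Rightarrow> complex) set" where
  "cyl n j T = closed_span n {tensor_at n j x w | x w. x \<in> l2_space \<and> w \<in> T}"

definition is_cyl :: "nat \<Rightarrow> nat \<Rightarrow> ((nat \<Rightarrow> 'i) \<Rightarrow> complex) set \<Rightarrow> bool" where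
  "is_cyl n j C \<longleftrightarrow> (\<exists>T. closed_subspace (n - 1) T \<and> C = cyl n j T)"

text \<open>exists_{H_j} S: the intersection of all closed subspaces of the form H_j tensor T
  containing S (the smallest such, when it is itself of that form).\<close>
definition ex_H :: "nat \<Rightarrow> nat \<Rightarrow> ((nat \<Rightarrow> 'i) \<Rightarrow> complex) set \<Rightarrow> ((nat \<Rightarrow> 'i) \<Rightarrow> complex) set" where
  "ex_H n j S = \<Inter>{C. is_cyl n j C \<and> S \<subseteq> C}"

end

theory Submission
  imports Defs
begin


abbreviation "N v \<alpha> \<equiv> (cmod (v \<alpha>))\<^sup>2"

lemma tuples_iff: "\<alpha> \<in> tuples n \<longleftrightarrow> (\<forall>m. m \<notin> {1..n} \<longrightarrow> \<alpha> m = undefined)"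
  unfolding tuples_def by (auto simp: PiE_iff extensional_def)

lemma ts_zero_out: "v \<in> tensor_space n \<Longrightarrow> \<alpha> \<notin> tuples n \<Longrightarrow> v \<alpha> = 0"
  unfolding tensor_space_def by auto

lemma ts_summ: "v \<in> tensor_space n \<Longrightarrow> (\<lambda>\<alpha>. N v \<alpha>) summable_on tuples n"
  unfolding tensor_space_def by auto

lemma ts_I: "(\<And>\<alpha>. \<alpha> \<notin> tuples n \<Longrightarrow> v \<alpha> = 0) \<Longrightarrow> (\<lambda>\<alpha>. N v \<alpha>) summable_on tuples n \<Longrightarrow> v \<in> tensor_space n"
  unfolding tensor_space_def by auto

lemma ts_0: "(\<lambda>_. 0) \<in> tensor_space n"
  by (rule ts_I) auto

lemma sq_add_le: "(cmod (a + b))\<^sup>2 \<le> 2 * (cmod a)\<^sup>2 + 2 * (cmod b)\<^sup>2"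
proof -
  have "cmod (a+b) \<le> cmod a + cmod b" by (rule norm_triangle_ineq)
  hence "(cmod (a+b))\<^sup>2 \<le> (cmod a + cmod b)\<^sup>2" by (simp add: power_mono)
  also have "\<dots> \<le> 2 * (cmod a)\<^sup>2 + 2 * (cmod b)\<^sup>2"
    by (smt (verit, best) sum_squares_bound power2_sum)
  finally show ?thesis .
qed

lemma ts_add: "v \<in> tensor_space n \<Longrightarrow> w \<in> tensor_space n \<Longrightarrow> (\<lambda>\<alpha>. v \<alpha> + w \<alpha>) \<in> tensor_space n"
proof (rule ts_I)
  assume v: "v \<in> tensor_space n" and w: "w \<in> tensor_space n"
  show "\<And>\<alpha>. \<alpha> \<notin> tuples n \<Longrightarrow> v \<alpha> + w \<alpha> = 0" using v w by (simp add: ts_zero_out)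
  have "(\<lambda>\<alpha>. 2 * N v \<alpha> + 2 * N w \<alpha>) summable_on tuples n"
    by (intro summable_on_add summable_on_cmult_right ts_summ v w)
  then show "(\<lambda>\<alpha>. N (\<lambda>\<alpha>. v \<alpha> + w \<alpha>) \<alpha>) summable_on tuples n"
    by (rule summable_on_comparison_test) (auto simp: sq_add_le)
qed

lemma ts_scale: "v \<in> tensor_space n \<Longrightarrow> (\<lambda>\<alpha>. c * v \<alpha>) \<in> tensor_space n"
proof (rule ts_I)
  assume v: "v \<in> tensor_space n"
  show "\<And>\<alpha>. \<alpha> \<notin> tuples n \<Longrightarrow> c * v \<alpha> = 0" using v by (simp add: ts_zero_out)
  have "(\<lambda>\<alpha>. (cmod c)\<^sup>2 * N v \<alpha>) summable_on tuples n"
    by (intro summable_on_cmult_right ts_summ v)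
  then show "(\<lambda>\<alpha>. N (\<lambda>\<alpha>. c * v \<alpha>) \<alpha>) summable_on tuples n"
    by (simp add: norm_mult power_mult_distrib)
qed

lemma ts_diff: "v \<in> tensor_space n \<Longrightarrow> w \<in> tensor_space n \<Longrightarrow> (\<lambda>\<alpha>. v \<alpha> - w \<alpha>) \<in> tensor_space n"
  using ts_add[OF _ ts_scale[of w n "-1"], of v] by simp

lemma ts_mask: "v \<in> tensor_space n \<Longrightarrow> (\<lambda>\<alpha>. if P \<alpha> then v \<alpha> else 0) \<in> tensor_space n"
proof (rule ts_I)
  assume v: "v \<in> tensor_space n"
  show "\<And>\<alpha>. \<alpha> \<notin> tuples n \<Longrightarrow> (if P \<alpha> then v \<alpha> else 0) = 0" using v by (simp add: ts_zero_out)
  show "(\<lambda>\<alpha>. N (\<lambda>\<alpha>. if P \<alpha> then v \<alpha> else 0) \<alpha>) summable_on tuples n"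
    by (rule summable_on_comparison_test[OF ts_summ[OF v]]) auto
qed

lemma tnorm_pt: assumes "v \<in> tensor_space n" shows "cmod (v \<alpha>) \<le> tnorm n v"
proof (cases "\<alpha> \<in> tuples n")
  case True
  have "sum (\<lambda>\<alpha>. N v \<alpha>) {\<alpha>} \<le> infsum (\<lambda>\<alpha>. N v \<alpha>) (tuples n)"
    by (rule finite_sum_le_infsum[OF ts_summ[OF assms]]) (use True in auto)
  hence "N v \<alpha> \<le> infsum (\<lambda>\<alpha>. N v \<alpha>) (tuples n)" by simp
  hence "sqrt (N v \<alpha>) \<le> tnorm n v" unfolding tnorm_def using real_sqrt_le_mono by blast
  thus ?thesis by simp
next
  case False
  have "0 \<le> tnorm n v" unfolding tnorm_def by (simp add: infsum_nonneg)
  thus ?thesis using False assms by (simp add: ts_zero_out)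
qed

lemma tnorm_nonneg: "0 \<le> tnorm n v"
  unfolding tnorm_def by (simp add: infsum_nonneg)

lemma pt_lim:
  assumes "\<And>k. f k \<in> tensor_space n" "v \<in> tensor_space n"
    "(\<lambda>k. tnorm n (\<lambda>\<alpha>. f k \<alpha> - v \<alpha>)) \<longlonglongrightarrow> 0"
  shows "(\<lambda>k. f k \<alpha>) \<longlonglongrightarrow> v \<alpha>"
proof -
  have "(\<lambda>k. cmod (f k \<alpha> - v \<alpha>)) \<longlonglongrightarrow> 0"
  proof (rule tendsto_sandwich[OF _ _ tendsto_const assms(3)])
    show "\<forall>\<^sub>F k in sequentially. 0 \<le> cmod (f k \<alpha> - v \<alpha>)" by simp
    show "\<forall>\<^sub>F k in sequentially. cmod (f k \<alpha> - v \<alpha>) \<le> tnorm n (\<lambda>\<alpha>. f k \<alpha> - v \<alpha>)"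
      using tnorm_pt[OF ts_diff[OF assms(1) assms(2)]] by simp
  qed
  thus ?thesis using tendsto_norm_zero_iff LIM_zero_cancel by (metis (no_types) tendsto_norm_zero_iff)
qed



definition shift :: "nat \<Rightarrow> nat \<Rightarrow> nat" where "shift j m = (if m < j then m else m - 1)"
definition ins :: "nat \<Rightarrow> nat \<Rightarrow> 'i \<Rightarrow> (nat \<Rightarrow> 'i) \<Rightarrow> (nat \<Rightarrow> 'i)" where
  "ins n j a \<beta> = (\<lambda>m. if m \<in> {1..n} then (if m = j then a else \<beta> (shift j m)) else undefined)"
definition sl :: "nat \<Rightarrow> nat \<Rightarrow> 'i \<Rightarrow> ((nat \<Rightarrow> 'i) \<Rightarrow> complex) \<Rightarrow> ((nat \<Rightarrow> 'i) \<Rightarrow> complex)" where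
  "sl n j a v = (\<lambda>\<beta>. if \<beta> \<in> tuples (n-1) then v (ins n j a \<beta>) else 0)"

lemma ins_tuples: "ins n j a \<beta> \<in> tuples n"
  by (simp add: tuples_iff ins_def)

lemma drop_tuples: "drop_coord n j \<alpha> \<in> tuples (n-1)"
  by (simp add: tuples_iff drop_coord_def)

lemma ins_at: "j \<in> {1..n} \<Longrightarrow> ins n j a \<beta> j = a"
  by (simp add: ins_def)

lemma drop_ins: assumes "j \<in> {1..n}" "\<beta> \<in> tuples (n-1)" shows "drop_coord n j (ins n j a \<beta>) = \<beta>"
proof
  fix m show "drop_coord n j (ins n j a \<beta>) m = \<beta> m"
    using assms by (auto simp: drop_coord_def ins_def shift_def tuples_iff)
qed

lemma ins_drop: assumes "j \<in> {1..n}" "\<alpha> \<in> tuples n" shows "ins n j (\<alpha> j) (drop_coord n j \<alpha>) = \<alpha>"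
proof
  fix m show "ins n j (\<alpha> j) (drop_coord n j \<alpha>) m = \<alpha> m"
    using assms by (auto simp: drop_coord_def ins_def shift_def tuples_iff)
qed

lemma tp_tuples: assumes "i \<in> {1..n}" "k \<in> {1..n}" "\<alpha> \<in> tuples n" shows "\<alpha> \<circ> Transposition.transpose i k \<in> tuples n"
  using assms unfolding tuples_iff by (auto simp: Transposition.transpose_def)

lemma tp_tuples_iff: assumes "i \<in> {1..n}" "k \<in> {1..n}" shows "\<alpha> \<circ> Transposition.transpose i k \<in> tuples n \<longleftrightarrow> \<alpha> \<in> tuples n"
  using tp_tuples[OF assms, of "\<alpha> \<circ> Transposition.transpose i k"] tp_tuples[OF assms, of \<alpha>]
  by (auto simp: comp_assoc)

lemma shift_in: "j \<in> {1..n} \<Longrightarrow> p \<in> {1..n} \<Longrightarrow> p \<noteq> j \<Longrightarrow> shift j p \<in> {1..n-1}"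
  by (auto simp: shift_def)

lemma shift_inj: "p \<noteq> j \<Longrightarrow> q \<noteq> j \<Longrightarrow> shift j p = shift j q \<Longrightarrow> p = q"
  by (auto simp: shift_def split: if_splits)

lemma ins_tp: assumes "i \<in> {1..n}" "k \<in> {1..n}" "i \<noteq> j" "k \<noteq> j" "j \<in> {1..n}"
  shows "ins n j a (\<beta> \<circ> Transposition.transpose (shift j i) (shift j k)) = ins n j a \<beta> \<circ> Transposition.transpose i k"
proof
  fix m
  show "ins n j a (\<beta> \<circ> Transposition.transpose (shift j i) (shift j k)) m = (ins n j a \<beta> \<circ> Transposition.transpose i k) m"
  proof (cases "m \<in> {1..n}")
    case False
    then have "m \<noteq> i" "m \<noteq> k" using assms by auto
    then show ?thesis using False by (auto simp add: ins_def)
  next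
    case True
    show ?thesis
    proof (cases "m = j")
      case True
      then show ?thesis using assms by (simp add: ins_def)
    next
      case mj: False
      have tm: "Transposition.transpose i k m \<in> {1..n}" "Transposition.transpose i k m \<noteq> j"
        using assms True mj by (auto simp: Transposition.transpose_def)
      have "Transposition.transpose (shift j i) (shift j k) (shift j m) = shift j (Transposition.transpose i k m)"
        using assms mj shift_inj[of m j i] shift_inj[of m j k] by (auto simp: Transposition.transpose_def)
      then show ?thesis using True mj tm by (simp add: ins_def)
    qed
  qed
qed

lemma Perm_two: assumes "i \<in> {1..n}" "k \<in> {1..n}"
  shows "Perm_n n {i,k} = {id, Transposition.transpose i k}"
proof
  show "{id, Transposition.transpose i k} \<subseteq> Perm_n n {i, k}"
    using assms by (auto simp: Perm_n_def permutes_swap_id)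
  show "Perm_n n {i, k} \<subseteq> {id, Transposition.transpose i k}"
  proof
    fix \<sigma> assume "\<sigma> \<in> Perm_n n {i,k}"
    hence p: "\<sigma> permutes {1..n}" and f: "\<forall>m\<in>{1..n} - {i,k}. \<sigma> m = m" by (auto simp: Perm_n_def)
    have fix_all: "\<sigma> m = m" if "m \<noteq> i" "m \<noteq> k" for m
      using f p that by (metis Diff_iff empty_iff insert_iff permutes_not_in)
    have inj: "inj \<sigma>" using p permutes_inj by blast
    have si: "\<sigma> i = i \<or> \<sigma> i = k"
    proof (rule ccontr)
      assume nn: "\<not> (\<sigma> i = i \<or> \<sigma> i = k)"
      hence "\<sigma> (\<sigma> i) = \<sigma> i" using fix_all by auto
      hence "\<sigma> i = i" using inj by (meson injD)
      thus False using nn by simp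
    qed
    have sk: "\<sigma> k = k \<or> \<sigma> k = i"
    proof (rule ccontr)
      assume nn: "\<not> (\<sigma> k = k \<or> \<sigma> k = i)"
      hence "\<sigma> (\<sigma> k) = \<sigma> k" using fix_all by auto
      hence "\<sigma> k = k" using inj by (meson injD)
      thus False using nn by simp
    qed
    show "\<sigma> \<in> {id, Transposition.transpose i k}"
    proof (cases "\<sigma> i = i")
      case True
      hence "\<sigma> k = k" using sk inj by (metis injD)
      hence "\<sigma> = id" using True fix_all by (intro ext) (metis id_apply)
      thus ?thesis by simp
    next
      case False
      hence "\<sigma> i = k" "i \<noteq> k" using si by auto
      hence "\<sigma> k = i" using sk inj by (metis injD)
      hence "\<sigma> = Transposition.transpose i k" using \<open>\<sigma> i = k\<close> fix_all by (intro ext) (simp add: Transposition.transpose_def)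
      thus ?thesis by simp
    qed
  qed
qed

lemma Dsym_char: assumes "i \<in> {1..n}" "k \<in> {1..n}"
  shows "v \<in> D_sym n {i,k} \<longleftrightarrow> v \<in> tensor_space n \<and> (\<forall>\<alpha>\<in>tuples n. v \<alpha> = v (\<alpha> \<circ> Transposition.transpose i k))"
  unfolding D_sym_def Perm_two[OF assms] by auto

lemma D2_char: assumes "i \<in> {1..n}" "k \<in> {1..n}"
  shows "v \<in> D2 n i k \<longleftrightarrow> v \<in> tensor_space n \<and> (\<forall>\<alpha>\<in>tuples n. v \<alpha> = v (\<alpha> \<circ> Transposition.transpose i k))"
  unfolding D2_def using Dsym_char[OF assms] .



lemma drop_tuples'[simp]: "drop_coord n j \<alpha> \<in> tuples (n - Suc 0)"
  using drop_tuples[of n j \<alpha>] by simp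

lemma ins_inj: "j \<in> {1..n} \<Longrightarrow> inj_on (ins n j a) (tuples (n-1))"
  by (metis drop_ins inj_onI)

lemma sl_ts: assumes "j \<in> {1..n}" "v \<in> tensor_space n"
  shows "sl n j a v \<in> tensor_space (n-1)"
    and "infsum (\<lambda>\<beta>. N (sl n j a v) \<beta>) (tuples (n-1)) \<le> infsum (\<lambda>\<alpha>. N v \<alpha>) (tuples n)"
proof -
  let ?g = "\<lambda>\<alpha>. N v \<alpha>" and ?h = "ins n j a"
  have sub: "?h ` tuples (n-1) \<subseteq> tuples n" by (auto simp: ins_tuples)
  have s1: "?g summable_on (?h ` tuples (n-1))"
    by (rule summable_on_subset_banach[OF ts_summ[OF assms(2)] sub])
  have eq: "\<And>\<beta>. \<beta> \<in> tuples (n-1) \<Longrightarrow> N (sl n j a v) \<beta> = (?g \<circ> ?h) \<beta>"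
    by (simp add: sl_def)
  have s2: "(?g \<circ> ?h) summable_on tuples (n-1)"
    using s1 summable_on_reindex[OF ins_inj[OF assms(1)], of ?g] by simp
  have s3: "(\<lambda>\<beta>. N (sl n j a v) \<beta>) summable_on tuples (n-1)"
    using s2 summable_on_cong[of "tuples (n-1)" "\<lambda>\<beta>. N (sl n j a v) \<beta>" "?g \<circ> ?h"] eq by metis
  show "sl n j a v \<in> tensor_space (n-1)"
    by (rule ts_I[OF _ s3]) (simp add: sl_def)
  have "infsum (\<lambda>\<beta>. N (sl n j a v) \<beta>) (tuples (n-1)) = infsum (?g \<circ> ?h) (tuples (n-1))"
    using infsum_cong[of "tuples (n-1)" "\<lambda>\<beta>. N (sl n j a v) \<beta>" "?g \<circ> ?h"] eq by metis
  also have "\<dots> = infsum ?g (?h ` tuples (n-1))"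
    by (rule infsum_reindex[OF ins_inj[OF assms(1)], symmetric])
  also have "\<dots> \<le> infsum ?g (tuples n)"
    by (rule infsum_mono_neutral[OF s1 ts_summ[OF assms(2)]]) (use sub in force)+
  finally show "infsum (\<lambda>\<beta>. N (sl n j a v) \<beta>) (tuples (n-1)) \<le> infsum (\<lambda>\<alpha>. N v \<alpha>) (tuples n)" .
qed

lemma tnorm_sl: assumes "j \<in> {1..n}" "v \<in> tensor_space n"
  shows "tnorm (n-1) (sl n j a v) \<le> tnorm n v"
  unfolding tnorm_def using sl_ts(2)[OF assms] real_sqrt_le_mono by blast

lemma sl_diff: "sl n j a (\<lambda>\<alpha>. v \<alpha> - w \<alpha>) = (\<lambda>\<beta>. sl n j a v \<beta> - sl n j a w \<beta>)"
  by (auto simp: sl_def)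
lemma sl_add: "sl n j a (\<lambda>\<alpha>. v \<alpha> + w \<alpha>) = (\<lambda>\<beta>. sl n j a v \<beta> + sl n j a w \<beta>)"
  by (auto simp: sl_def)
lemma sl_scale: "sl n j a (\<lambda>\<alpha>. c * v \<alpha>) = (\<lambda>\<beta>. c * sl n j a v \<beta>)"
  by (auto simp: sl_def)
lemma sl_0: "sl n j a (\<lambda>\<alpha>. 0) = (\<lambda>\<beta>. 0)"
  by (auto simp: sl_def)

definition CS :: "nat \<Rightarrow> nat \<Rightarrow> ((nat \<Rightarrow> 'i) \<Rightarrow> complex) set \<Rightarrow> ((nat \<Rightarrow> 'i) \<Rightarrow> complex) set" where
  "CS n j T = {v \<in> tensor_space n. \<forall>a. sl n j a v \<in> T}"

lemma closed_CS: assumes j: "j \<in> {1..n}" and T: "closed_subspace (n-1) T"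
  shows "closed_subspace n (CS n j T)"
  unfolding closed_subspace_def
proof (intro conjI ballI allI impI)
  have T0: "(\<lambda>_. 0) \<in> T" and Tadd: "\<And>v w. v \<in> T \<Longrightarrow> w \<in> T \<Longrightarrow> (\<lambda>\<alpha>. v \<alpha> + w \<alpha>) \<in> T"
    and Tsc: "\<And>c v. v \<in> T \<Longrightarrow> (\<lambda>\<alpha>. c * v \<alpha>) \<in> T"
    and Tlim: "\<And>f v. (\<forall>k. f k \<in> T) \<Longrightarrow> v \<in> tensor_space (n-1) \<Longrightarrow>
        (\<lambda>k. tnorm (n-1) (\<lambda>\<alpha>. f k \<alpha> - v \<alpha>)) \<longlonglongrightarrow> 0 \<Longrightarrow> v \<in> T"
    using T unfolding closed_subspace_def by blast+
  show "CS n j T \<subseteq> tensor_space n" by (auto simp: CS_def)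
  show "(\<lambda>_. 0) \<in> CS n j T" using T0 by (simp add: CS_def ts_0 sl_0)
  show "(\<lambda>\<alpha>. v \<alpha> + w \<alpha>) \<in> CS n j T" if "v \<in> CS n j T" "w \<in> CS n j T" for v w
    using that Tadd by (auto simp: CS_def ts_add sl_add)
  show "(\<lambda>\<alpha>. c * v \<alpha>) \<in> CS n j T" if "v \<in> CS n j T" for c v
    using that Tsc by (auto simp: CS_def ts_scale sl_scale)
  fix f v
  assume f: "\<forall>k. f k \<in> CS n j T" and v: "v \<in> tensor_space n"
    and lim: "(\<lambda>k. tnorm n (\<lambda>\<alpha>. f k \<alpha> - v \<alpha>)) \<longlonglongrightarrow> 0"
  have fts: "\<And>k. f k \<in> tensor_space n" using f by (auto simp: CS_def)
  have "sl n j a v \<in> T" for a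
  proof (rule Tlim)
    show "\<forall>k. sl n j a (f k) \<in> T" using f by (auto simp: CS_def)
    show "sl n j a v \<in> tensor_space (n-1)" by (rule sl_ts(1)[OF j v])
    show "(\<lambda>k. tnorm (n-1) (\<lambda>\<beta>. sl n j a (f k) \<beta> - sl n j a v \<beta>)) \<longlonglongrightarrow> 0"
    proof (rule tendsto_sandwich[OF _ _ tendsto_const lim])
      show "\<forall>\<^sub>F k in sequentially. 0 \<le> tnorm (n-1) (\<lambda>\<beta>. sl n j a (f k) \<beta> - sl n j a v \<beta>)"
        by (simp add: tnorm_nonneg)
      show "\<forall>\<^sub>F k in sequentially. tnorm (n-1) (\<lambda>\<beta>. sl n j a (f k) \<beta> - sl n j a v \<beta>) \<le> tnorm n (\<lambda>\<alpha>. f k \<alpha> - v \<alpha>)"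
        using tnorm_sl[OF j ts_diff[OF fts v]] by (simp add: sl_diff)
    qed
  qed
  then show "v \<in> CS n j T" using v by (simp add: CS_def)
qed

lemma ts_tensor_at: assumes j: "j \<in> {1..n}" and x: "x \<in> l2_space" and w: "w \<in> tensor_space (n-1)"
  shows "tensor_at n j x w \<in> tensor_space n"
proof (rule ts_I)
  show "\<And>\<alpha>. \<alpha> \<notin> tuples n \<Longrightarrow> tensor_at n j x w \<alpha> = 0" by (simp add: tensor_at_def)
  let ?g = "\<lambda>(a, \<beta>). ins n j a \<beta>"
  have bij: "bij_betw ?g (UNIV \<times> tuples (n-1)) (tuples n)"
  proof (rule bij_betw_byWitness[where f' = "\<lambda>\<alpha>. (\<alpha> j, drop_coord n j \<alpha>)"])
    show "\<forall>a\<in>UNIV \<times> tuples (n - 1). (case ?g a of \<alpha> \<Rightarrow> (\<alpha> j, drop_coord n j \<alpha>)) = a"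
      using j by (auto simp: ins_at drop_ins)
    show "\<forall>a'\<in>tuples n. ?g (a' j, drop_coord n j a') = a'"
      using j by (auto simp: ins_drop)
    show "?g ` (UNIV \<times> tuples (n - 1)) \<subseteq> tuples n" by (auto simp: ins_tuples)
    show "(\<lambda>\<alpha>. (\<alpha> j, drop_coord n j \<alpha>)) ` tuples n \<subseteq> UNIV \<times> tuples (n - 1)" by (auto simp: drop_tuples)
  qed
  have "(\<lambda>p. N (tensor_at n j x w) (?g p)) summable_on (UNIV \<times> tuples (n-1))"
  proof -
    have xs: "(\<lambda>a. N x a) summable_on UNIV" using x by (simp add: l2_space_def)
    have "(\<lambda>(a,\<beta>). N x a * N w \<beta>) summable_on (UNIV \<times> tuples (n-1))"
    proof (rule summable_on_SigmaI[where g = "\<lambda>a. N x a * infsum (\<lambda>\<beta>. N w \<beta>) (tuples (n-1))"])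
      show "\<And>a. a \<in> UNIV \<Longrightarrow> ((\<lambda>\<beta>. (case (a, \<beta>) of (a, \<beta>) \<Rightarrow> N x a * N w \<beta>)) has_sum N x a * infsum (\<lambda>\<beta>. N w \<beta>) (tuples (n-1))) (tuples (n-1))"
        using has_sum_cmult_right[OF has_sum_infsum[OF ts_summ[OF w]]] by simp
      show "(\<lambda>a. N x a * infsum (\<lambda>\<beta>. N w \<beta>) (tuples (n-1))) summable_on UNIV"
        by (rule summable_on_cmult_left[OF xs])
      show "\<And>a \<beta>. a \<in> UNIV \<Longrightarrow> \<beta> \<in> tuples (n-1) \<Longrightarrow> 0 \<le> (case (a, \<beta>) of (a, \<beta>) \<Rightarrow> N x a * N w \<beta>)"
        by simp
    qed
    moreover have "\<And>p. p \<in> UNIV \<times> tuples (n-1) \<Longrightarrow> N (tensor_at n j x w) (?g p) = (\<lambda>(a,\<beta>). N x a * N w \<beta>) p"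
      using j by (auto simp: tensor_at_def ins_tuples ins_at drop_ins norm_mult power_mult_distrib)
    ultimately show ?thesis using summable_on_cong[of "UNIV \<times> tuples (n-1)" "\<lambda>p. N (tensor_at n j x w) (?g p)" "(\<lambda>(a,\<beta>). N x a * N w \<beta>)"] by simp
  qed
  then show "(\<lambda>\<alpha>. N (tensor_at n j x w) \<alpha>) summable_on tuples n"
    using summable_on_reindex_bij_betw[OF bij, of "\<lambda>\<alpha>. N (tensor_at n j x w) \<alpha>"] by simp
qed

lemma sl_tensor_at: assumes j: "j \<in> {1..n}" and w: "w \<in> tensor_space (n-1)"
  shows "sl n j a (tensor_at n j x w) = (\<lambda>\<beta>. x a * w \<beta>)"
  using j ts_zero_out[OF w] by (auto simp: sl_def tensor_at_def ins_tuples ins_at drop_ins)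

lemma cyl_sub_CS: assumes j: "j \<in> {1..n}" and T: "closed_subspace (n-1) T"
  shows "cyl n j T \<subseteq> CS n j T"
proof -
  have Tsc: "\<And>c v. v \<in> T \<Longrightarrow> (\<lambda>\<alpha>. c * v \<alpha>) \<in> T" and Tts: "T \<subseteq> tensor_space (n-1)"
    using T unfolding closed_subspace_def by blast+
  have "{tensor_at n j x w | x w. x \<in> l2_space \<and> w \<in> T} \<subseteq> CS n j T"
    using j Tts Tsc by (auto simp: CS_def ts_tensor_at sl_tensor_at)
  then show ?thesis unfolding cyl_def closed_span_def using closed_CS[OF j T] by blast
qed



definition ind :: "'i \<Rightarrow> 'i \<Rightarrow> complex" where "ind a = (\<lambda>b. if b = a then 1 else 0)"

lemma ind_l2: "ind a \<in> l2_space"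
  unfolding l2_space_def mem_Collect_eq
  by (rule finite_nonzero_values_imp_summable_on) (rule finite_subset[of _ "{a}"], auto simp: ind_def)

definition restr :: "nat \<Rightarrow> 'i set \<Rightarrow> ((nat \<Rightarrow> 'i) \<Rightarrow> complex) \<Rightarrow> ((nat \<Rightarrow> 'i) \<Rightarrow> complex)" where
  "restr j F v = (\<lambda>\<alpha>. if \<alpha> j \<in> F then v \<alpha> else 0)"

lemma restr_insert: assumes j: "j \<in> {1..n}" and v: "v \<in> tensor_space n" and a: "a \<notin> F"
  shows "restr j (insert a F) v = (\<lambda>\<alpha>. restr j F v \<alpha> + tensor_at n j (ind a) (sl n j a v) \<alpha>)"
proof
  fix \<alpha>
  show "restr j (insert a F) v \<alpha> = restr j F v \<alpha> + tensor_at n j (ind a) (sl n j a v) \<alpha>"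
  proof (cases "\<alpha> \<in> tuples n")
    case False thus ?thesis using v by (simp add: restr_def tensor_at_def ts_zero_out)
  next
    case True
    show ?thesis
    proof (cases "\<alpha> j = a")
      case True
      have "sl n j a v (drop_coord n j \<alpha>) = v \<alpha>"
        using ins_drop[OF j \<open>\<alpha> \<in> tuples n\<close>] True by (simp add: sl_def)
      thus ?thesis using True a \<open>\<alpha> \<in> tuples n\<close> by (simp add: restr_def tensor_at_def ind_def)
    next
      case False
      thus ?thesis using \<open>\<alpha> \<in> tuples n\<close> by (simp add: restr_def tensor_at_def ind_def)
    qed
  qed
qed

lemma restr_in: assumes j: "j \<in> {1..n}" and v: "v \<in> CS n j T" and S: "closed_subspace n S"
  and gens: "{tensor_at n j x w | x w. x \<in> l2_space \<and> w \<in> T} \<subseteq> S" and F: "finite F"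
  shows "restr j F v \<in> S"
  using F
proof (induction F rule: finite_induct)
  case empty
  have "restr j {} v = (\<lambda>_. 0)" by (simp add: restr_def)
  then show ?case using S by (simp add: closed_subspace_def)
next
  case (insert a F)
  have vts: "v \<in> tensor_space n" and sT: "sl n j a v \<in> T" using v by (auto simp: CS_def)
  have "tensor_at n j (ind a) (sl n j a v) \<in> {tensor_at n j x w | x w. x \<in> l2_space \<and> w \<in> T}"
    using sT ind_l2[of a] by (intro CollectI exI[of _ "ind a"] exI[of _ "sl n j a v"]) simp
  hence "tensor_at n j (ind a) (sl n j a v) \<in> S" by (rule subsetD[OF gens])
  then show ?case using insert S restr_insert[OF j vts insert(2)] by (simp add: closed_subspace_def)
qed

lemma tail_small: assumes v: "v \<in> tensor_space n" and e: "e > 0"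
  shows "\<exists>F. finite F \<and> infsum (\<lambda>\<alpha>. N (\<lambda>\<alpha>. restr j F v \<alpha> - v \<alpha>) \<alpha>) (tuples n) \<le> e"
proof -
  let ?g = "\<lambda>\<alpha>. N v \<alpha>"
  have gs: "?g summable_on tuples n" by (rule ts_summ[OF v])
  obtain G where G: "finite G" "G \<subseteq> tuples n" "dist (sum ?g G) (infsum ?g (tuples n)) \<le> e"
    using infsum_finite_approximation[OF gs e] by blast
  define F where "F = (\<lambda>\<alpha>. \<alpha> j) ` G"
  let ?h1 = "\<lambda>\<alpha>. if \<alpha> j \<in> F then ?g \<alpha> else 0"
  let ?h2 = "\<lambda>\<alpha>. if \<alpha> j \<in> F then 0 else ?g \<alpha>"
  have h1s: "?h1 summable_on tuples n" by (rule summable_on_comparison_test[OF gs]) auto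
  have h2s: "?h2 summable_on tuples n" by (rule summable_on_comparison_test[OF gs]) auto
  have sum: "infsum ?h1 (tuples n) + infsum ?h2 (tuples n) = infsum ?g (tuples n)"
    using infsum_add[OF h1s h2s] by (simp add: if_distrib cong: if_cong)
  have "sum ?h1 G \<le> infsum ?h1 (tuples n)"
    by (rule finite_sum_le_infsum[OF h1s G(1) G(2)]) auto
  moreover have "sum ?h1 G = sum ?g G" by (rule sum.cong) (auto simp: F_def)
  ultimately have "infsum ?h2 (tuples n) \<le> e" using sum G(3) by (simp add: dist_real_def)
  moreover have "(\<lambda>\<alpha>. N (\<lambda>\<alpha>. restr j F v \<alpha> - v \<alpha>) \<alpha>) = ?h2"
    by (auto simp: restr_def)
  ultimately have A: "infsum (\<lambda>\<alpha>. N (\<lambda>\<alpha>. restr j F v \<alpha> - v \<alpha>) \<alpha>) (tuples n) \<le> e" by simp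
  have B: "finite F" using F_def G(1) by simp
  show ?thesis by (rule exI[of _ F]) (use A B in simp)
qed

lemma CS_sub_cyl: assumes j: "j \<in> {1..n}"
  shows "CS n j T \<subseteq> cyl n j T"
proof
  fix v assume v: "v \<in> CS n j T"
  have vts: "v \<in> tensor_space n" using v by (simp add: CS_def)
  have "\<forall>k. \<exists>F. finite F \<and> infsum (\<lambda>\<alpha>. N (\<lambda>\<alpha>. restr j F v \<alpha> - v \<alpha>) \<alpha>) (tuples n) \<le> (inverse (real (Suc k)))\<^sup>2"
    using tail_small[OF vts] by simp
  from choice[OF this] obtain Fk where Fk0: "\<forall>k. finite (Fk k) \<and>
    infsum (\<lambda>\<alpha>. N (\<lambda>\<alpha>. restr j (Fk k) v \<alpha> - v \<alpha>) \<alpha>) (tuples n) \<le> (inverse (real (Suc k)))\<^sup>2"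
    by (rule exE)
  have Fk: "\<And>k. finite (Fk k)"
    "\<And>k. infsum (\<lambda>\<alpha>. N (\<lambda>\<alpha>. restr j (Fk k) v \<alpha> - v \<alpha>) \<alpha>) (tuples n) \<le> (inverse (real (Suc k)))\<^sup>2"
    using Fk0 by auto
  have bnd: "tnorm n (\<lambda>\<alpha>. restr j (Fk k) v \<alpha> - v \<alpha>) \<le> inverse (real (Suc k))" for k
  proof -
    have "tnorm n (\<lambda>\<alpha>. restr j (Fk k) v \<alpha> - v \<alpha>) \<le> sqrt ((inverse (real (Suc k)))\<^sup>2)"
      unfolding tnorm_def using Fk(2)[of k] real_sqrt_le_mono by blast
    thus ?thesis by simp
  qed
  have lim: "(\<lambda>k. tnorm n (\<lambda>\<alpha>. restr j (Fk k) v \<alpha> - v \<alpha>)) \<longlonglongrightarrow> 0"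
  proof (rule tendsto_sandwich[OF _ _ tendsto_const LIMSEQ_inverse_real_of_nat])
    show "\<forall>\<^sub>F k in sequentially. 0 \<le> tnorm n (\<lambda>\<alpha>. restr j (Fk k) v \<alpha> - v \<alpha>)"
      by (simp add: tnorm_nonneg)
    show "\<forall>\<^sub>F k in sequentially. tnorm n (\<lambda>\<alpha>. restr j (Fk k) v \<alpha> - v \<alpha>) \<le> inverse (real (Suc k))"
      using bnd by (intro always_eventually allI)
  qed
  show "v \<in> cyl n j T"
    unfolding cyl_def closed_span_def
  proof (intro InterI, clarify)
    fix S assume S: "closed_subspace n S" and gens: "{tensor_at n j x w | x w. x \<in> l2_space \<and> w \<in> T} \<subseteq> S"
    have Slim: "\<And>f v. (\<forall>k. f k \<in> S) \<Longrightarrow> v \<in> tensor_space n \<Longrightarrow>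
        (\<lambda>k. tnorm n (\<lambda>\<alpha>. f k \<alpha> - v \<alpha>)) \<longlonglongrightarrow> 0 \<Longrightarrow> v \<in> S"
      using S unfolding closed_subspace_def by blast
    have "\<forall>k. restr j (Fk k) v \<in> S" using restr_in[OF j v S gens Fk(1)] by simp
    then show "v \<in> S" by (rule Slim[OF _ vts lim])
  qed
qed

lemma cyl_eq_CS: "j \<in> {1..n} \<Longrightarrow> closed_subspace (n-1) T \<Longrightarrow> cyl n j T = CS n j T"
  using cyl_sub_CS CS_sub_cyl by (metis subset_antisym)



lemma tuples_m1: "tuples (n - Suc 0) = tuples (n-1)" by simp

lemma CS_D2: assumes j: "j \<in> {1..n}" and i: "i \<in> {1..n}" and k: "k \<in> {1..n}" and ij: "i \<noteq> j" and kj: "k \<noteq> j"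
  shows "(D2 n i k :: ((nat \<Rightarrow> 'i) \<Rightarrow> complex) set) = CS n j (D2 (n-1) (shift j i) (shift j k))"
proof -
  have i': "shift j i \<in> {1..n-1}" and k': "shift j k \<in> {1..n-1}" using shift_in j i k ij kj by auto
  let ?t = "Transposition.transpose i k" and ?t' = "Transposition.transpose (shift j i) (shift j k)"
  show ?thesis
  proof (rule set_eqI, rule iffI)
    fix v :: "(nat \<Rightarrow> 'i) \<Rightarrow> complex" assume v: "v \<in> D2 n i k"
    hence vts: "v \<in> tensor_space n" and sym: "\<And>\<alpha>. \<alpha> \<in> tuples n \<Longrightarrow> v \<alpha> = v (\<alpha> \<circ> ?t)"
      using D2_char[OF i k] by auto
    have "sl n j a v \<in> D2 (n-1) (shift j i) (shift j k)" for a
      unfolding D2_char[OF i' k']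
    proof (intro conjI ballI)
      show "sl n j a v \<in> tensor_space (n-1)" by (rule sl_ts(1)[OF j vts])
      fix \<beta> :: "nat \<Rightarrow> 'i" assume \<beta>: "\<beta> \<in> tuples (n-1)"
      have "\<beta> \<circ> ?t' \<in> tuples (n-1)" by (rule tp_tuples[OF i' k' \<beta>])
      hence "sl n j a v (\<beta> \<circ> ?t') = v (ins n j a \<beta> \<circ> ?t)"
        by (simp add: sl_def ins_tp[OF i k ij kj j])
      also have "\<dots> = v (ins n j a \<beta>)" using sym[OF ins_tuples] by simp
      also have "\<dots> = sl n j a v \<beta>" using \<beta> by (simp add: sl_def)
      finally show "sl n j a v \<beta> = sl n j a v (\<beta> \<circ> ?t')" by simp
    qed
    thus "v \<in> CS n j (D2 (n-1) (shift j i) (shift j k))" using vts by (simp add: CS_def)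
  next
    fix v :: "(nat \<Rightarrow> 'i) \<Rightarrow> complex" assume v: "v \<in> CS n j (D2 (n-1) (shift j i) (shift j k))"
    hence vts: "v \<in> tensor_space n" and sl: "\<And>a. sl n j a v \<in> D2 (n-1) (shift j i) (shift j k)"
      by (auto simp: CS_def)
    have "v \<alpha> = v (\<alpha> \<circ> ?t)" if \<alpha>: "\<alpha> \<in> tuples n" for \<alpha>
    proof -
      let ?a = "\<alpha> j" and ?\<beta> = "drop_coord n j \<alpha>"
      have \<beta>: "?\<beta> \<in> tuples (n-1)" by (rule drop_tuples)
      have \<beta>': "?\<beta> \<circ> ?t' \<in> tuples (n-1)" by (rule tp_tuples[OF i' k' \<beta>])
      have symb: "sl n j ?a v ?\<beta> = sl n j ?a v (?\<beta> \<circ> ?t')"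
        using sl[of ?a] \<beta> D2_char[OF i' k'] by blast
      have "v (\<alpha> \<circ> ?t) = v (ins n j ?a ?\<beta> \<circ> ?t)" using ins_drop[OF j \<alpha>] by simp
      also have "\<dots> = v (ins n j ?a (?\<beta> \<circ> ?t'))" by (simp add: ins_tp[OF i k ij kj j])
      also have "\<dots> = sl n j ?a v (?\<beta> \<circ> ?t')" using \<beta>' by (simp add: sl_def)
      also have "\<dots> = sl n j ?a v ?\<beta>" using symb by simp
      also have "\<dots> = v (ins n j ?a ?\<beta>)" using \<beta> by (simp add: sl_def)
      also have "\<dots> = v \<alpha>" using ins_drop[OF j \<alpha>] by simp
      finally show ?thesis by simp
    qed
    thus "v \<in> D2 n i k" using vts D2_char[OF i k] by blast
  qed
qed

lemma S_sub: assumes i: "i \<in> {1..n}" and j: "j \<in> {1..n}" and k: "k \<in> {1..n}" and ij: "i \<noteq> j" and kj: "k \<noteq> j"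
  shows "D2 n i j \<inter> D2 n j k \<subseteq> (D2 n i k :: ((nat \<Rightarrow> 'i) \<Rightarrow> complex) set)"
proof
  fix v :: "(nat \<Rightarrow> 'i) \<Rightarrow> complex" assume "v \<in> D2 n i j \<inter> D2 n j k"
  hence vts: "v \<in> tensor_space n" and s1: "\<And>\<alpha>. \<alpha> \<in> tuples n \<Longrightarrow> v \<alpha> = v (\<alpha> \<circ> Transposition.transpose i j)"
    and s2: "\<And>\<alpha>. \<alpha> \<in> tuples n \<Longrightarrow> v \<alpha> = v (\<alpha> \<circ> Transposition.transpose j k)"
    using D2_char[OF i j] D2_char[OF j k] by auto
  show "v \<in> D2 n i k"
  proof (cases "i = k")
    case True
    have "v \<in> D2 n i k \<longleftrightarrow> v \<in> tensor_space n \<and> (\<forall>\<alpha>\<in>tuples n. v \<alpha> = v (\<alpha> \<circ> Transposition.transpose i k))"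
      by (rule D2_char[OF i k])
    thus ?thesis using True vts by simp
  next
    case False
    have "v \<alpha> = v (\<alpha> \<circ> Transposition.transpose i k)" if \<alpha>: "\<alpha> \<in> tuples n" for \<alpha>
    proof -
      let ?a = "Transposition.transpose i j" and ?b = "Transposition.transpose j k"
      have t: "Transposition.transpose i k = ?a \<circ> ?b \<circ> ?a"
        using transpose_comp_triple[of i k j] False kj by simp
      have a1: "\<alpha> \<circ> ?a \<in> tuples n" by (rule tp_tuples[OF i j \<alpha>])
      have a2: "\<alpha> \<circ> ?a \<circ> ?b \<in> tuples n" by (rule tp_tuples[OF j k a1])
      have "v (\<alpha> \<circ> Transposition.transpose i k) = v ((\<alpha> \<circ> ?a \<circ> ?b) \<circ> ?a)" by (simp add: t comp_assoc)
      also have "\<dots> = v (\<alpha> \<circ> ?a \<circ> ?b)" using s1[OF a2] by simp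
      also have "\<dots> = v (\<alpha> \<circ> ?a)" using s2[OF a1] by simp
      also have "\<dots> = v \<alpha>" using s1[OF \<alpha>] by simp
      finally show ?thesis by simp
    qed
    thus ?thesis using vts D2_char[OF i k] by blast
  qed
qed



lemma ts_perm: assumes v: "v \<in> tensor_space n" and p: "p \<in> {1..n}" and q: "q \<in> {1..n}"
  shows "(\<lambda>\<alpha>. v (\<alpha> \<circ> Transposition.transpose p q)) \<in> tensor_space n"
proof (rule ts_I)
  let ?t = "Transposition.transpose p q"
  show "\<And>\<alpha>. \<alpha> \<notin> tuples n \<Longrightarrow> v (\<alpha> \<circ> ?t) = 0"
    using tp_tuples_iff[OF p q] ts_zero_out[OF v] by blast
  have bij: "bij_betw (\<lambda>\<alpha>. \<alpha> \<circ> ?t) (tuples n) (tuples n)"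
    by (rule bij_betw_byWitness[where f' = "\<lambda>\<alpha>. \<alpha> \<circ> ?t"])
       (auto simp: comp_assoc tp_tuples[OF p q])
  show "(\<lambda>\<alpha>. N (\<lambda>\<alpha>. v (\<alpha> \<circ> ?t)) \<alpha>) summable_on tuples n"
    using summable_on_reindex_bij_betw[OF bij, of "\<lambda>\<alpha>. N v \<alpha>"] ts_summ[OF v] by simp
qed

lemma drop_ins_tp: assumes j: "j \<in> {1..n}" and p: "p \<in> {1..n}" "p \<noteq> j" and \<beta>: "\<beta> \<in> tuples (n-1)"
  shows "drop_coord n j (ins n j a \<beta> \<circ> Transposition.transpose p j) = \<beta>(shift j p := a)"
proof
  fix m
  show "drop_coord n j (ins n j a \<beta> \<circ> Transposition.transpose p j) m = (\<beta>(shift j p := a)) m"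
    using j p \<beta> by (auto simp: drop_coord_def ins_def shift_def tuples_iff Transposition.transpose_def)
qed

lemma T1_ins: assumes j: "j \<in> {1..n}" and \<beta>: "\<beta> \<in> tuples (n-1)"
  shows "tensor_at n j (ind a) w (ins n j a \<beta>) = w \<beta>"
  using j \<beta> by (simp add: tensor_at_def ins_tuples ins_at drop_ins ind_def)

lemma T1_ins_tp: assumes j: "j \<in> {1..n}" and p: "p \<in> {1..n}" "p \<noteq> j" and \<beta>: "\<beta> \<in> tuples (n-1)"
  shows "tensor_at n j (ind a) w (ins n j a \<beta> \<circ> Transposition.transpose p j) = (if \<beta> (shift j p) = a then w \<beta> else 0)"
proof -
  have tu: "ins n j a \<beta> \<circ> Transposition.transpose p j \<in> tuples n" by (rule tp_tuples[OF p(1) j ins_tuples])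
  have at: "(ins n j a \<beta> \<circ> Transposition.transpose p j) j = \<beta> (shift j p)"
    using p j by (simp add: ins_def)
  show ?thesis using tu at drop_ins_tp[OF j p \<beta>, of a] by (auto simp: tensor_at_def ind_def fun_upd_idem)
qed

lemma tp_ident: assumes "x \<noteq> y" "y \<noteq> z" "x \<noteq> z"
  shows "Transposition.transpose x z \<circ> Transposition.transpose y z = Transposition.transpose y z \<circ> Transposition.transpose x y"
  using assms by (auto simp: fun_eq_iff Transposition.transpose_def)

lemma D2_scale: assumes p: "p \<in> {1..m}" and q: "q \<in> {1..m}" and w: "w \<in> D2 m p q"
  shows "(\<lambda>\<beta>. c * w \<beta>) \<in> D2 m p q"
  using w ts_scale unfolding D2_char[OF p q] by auto

lemma T1_D2: assumes j: "j \<in> {1..n}" and i: "i \<in> {1..n}" and k: "k \<in> {1..n}" and ij: "i \<noteq> j" and kj: "k \<noteq> j"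
  and w: "w \<in> D2 (n-1) (shift j i) (shift j k)"
  shows "tensor_at n j (ind a) w \<in> D2 n i k"
proof -
  have i': "shift j i \<in> {1..n-1}" and k': "shift j k \<in> {1..n-1}" using shift_in j i k ij kj by auto
  have wts: "w \<in> tensor_space (n-1)" using w D2_char[OF i' k'] by blast
  have "tensor_at n j (ind a) w \<in> CS n j (D2 (n-1) (shift j i) (shift j k))"
    unfolding CS_def using ts_tensor_at[OF j ind_l2 wts] sl_tensor_at[OF j wts] D2_scale[OF i' k' w]
    by simp
  thus ?thesis using CS_D2[OF j i k ij kj] by (metis (no_types))
qed



definition E :: "nat \<Rightarrow> 'i \<Rightarrow> ((nat \<Rightarrow> 'i) \<Rightarrow> complex) \<Rightarrow> ((nat \<Rightarrow> 'i) \<Rightarrow> complex)" where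
  "E p a w = (\<lambda>\<beta>. if \<beta> p = a then w \<beta> else 0)"

lemma E_ts: "w \<in> tensor_space m \<Longrightarrow> E p a w \<in> tensor_space m"
  unfolding E_def by (rule ts_mask)

lemma tp_at: "(\<beta> \<circ> Transposition.transpose p q) p = \<beta> q" "(\<beta> \<circ> Transposition.transpose p q) q = \<beta> p"
  by auto

lemma Q_D2: assumes p: "p \<in> {1..m}" and q: "q \<in> {1..m}" and w: "(w :: (nat \<Rightarrow> 'i) \<Rightarrow> complex) \<in> D2 m p q"
  shows "(\<lambda>\<beta>. E p a w \<beta> + E q a w \<beta>) \<in> D2 m p q"
    and "(\<lambda>\<beta>. if \<beta> p = a \<and> \<beta> q = a then w \<beta> else 0) \<in> D2 m p q"
proof -
  have wts: "w \<in> tensor_space m" and sym: "\<And>\<beta>. \<beta> \<in> tuples m \<Longrightarrow> w \<beta> = w (\<beta> \<circ> Transposition.transpose p q)"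
    using w D2_char[OF p q] by auto
  have "(\<lambda>\<beta>. E p a w \<beta> + E q a w \<beta>) \<in> tensor_space m" by (intro ts_add E_ts wts)
  moreover have "E p a w \<beta> + E q a w \<beta> = E p a w (\<beta> \<circ> Transposition.transpose p q) + E q a w (\<beta> \<circ> Transposition.transpose p q)"
    if "\<beta> \<in> tuples m" for \<beta>
    using sym[OF that] by (auto simp: E_def tp_at)
  ultimately show "(\<lambda>\<beta>. E p a w \<beta> + E q a w \<beta>) \<in> D2 m p q"
    unfolding D2_char[OF p q] by blast
  have "(\<lambda>\<beta>. if \<beta> p = a \<and> \<beta> q = a then w \<beta> else 0) \<in> tensor_space m" by (intro ts_mask wts)
  moreover have "(if \<beta> p = a \<and> \<beta> q = a then w \<beta> else 0) = (if (\<beta> \<circ> Transposition.transpose p q) p = a \<and> (\<beta> \<circ> Transposition.transpose p q) q = a then w (\<beta> \<circ> Transposition.transpose p q) else 0)"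
    if "\<beta> \<in> tuples m" for \<beta>
    using sym[OF that] by (auto simp: tp_at)
  ultimately show "(\<lambda>\<beta>. if \<beta> p = a \<and> \<beta> q = a then w \<beta> else 0) \<in> D2 m p q"
    unfolding D2_char[OF p q] by blast
qed

lemma closedT: assumes "closed_subspace m T"
  shows "\<And>v w. v \<in> T \<Longrightarrow> w \<in> T \<Longrightarrow> (\<lambda>\<alpha>. v \<alpha> + w \<alpha>) \<in> T"
    and "\<And>c v. v \<in> T \<Longrightarrow> (\<lambda>\<alpha>. c * v \<alpha>) \<in> T"
    and "T \<subseteq> tensor_space m"
  using assms unfolding closed_subspace_def by blast+

lemma core_ne: fixes T :: "((nat \<Rightarrow> 'i) \<Rightarrow> complex) set"
  assumes j: "j \<in> {1..n}" and i: "i \<in> {1..n}" and k: "k \<in> {1..n}" and ij: "i \<noteq> j" and kj: "k \<noteq> j"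
    and ik: "i \<noteq> k" and T: "closed_subspace (n-1) T"
    and H: "\<And>u a. u \<in> D2 n i j \<inter> D2 n j k \<Longrightarrow> sl n j a u \<in> T"
  shows "D2 (n-1) (shift j i) (shift j k) \<subseteq> T"
proof -
  define i' where "i' = shift j i"
  define k' where "k' = shift j k"
  have i': "i' \<in> {1..n-1}" and k': "k' \<in> {1..n-1}" using shift_in j i k ij kj by (auto simp: i'_def k'_def)
  define a :: 'i where "a = undefined"
  have Lw: "(\<lambda>\<beta>. w \<beta> + E i' a w \<beta> + E k' a w \<beta>) \<in> T" if w: "w \<in> D2 (n-1) i' k'" for w
  proof -
    have wts: "w \<in> tensor_space (n-1)" using w D2_char[OF i' k'] by blast
    define T1 where "T1 = tensor_at n j (ind a) w"
    have T1ts: "T1 \<in> tensor_space n" unfolding T1_def by (rule ts_tensor_at[OF j ind_l2 wts])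
    have T1sym: "\<And>\<gamma>. \<gamma> \<in> tuples n \<Longrightarrow> T1 (\<gamma> \<circ> Transposition.transpose i k) = T1 \<gamma>"
      using T1_D2[OF j i k ij kj, of w a] w D2_char[OF i k] unfolding T1_def i'_def k'_def by metis
    define u where "u = (\<lambda>\<alpha>. T1 \<alpha> + T1 (\<alpha> \<circ> Transposition.transpose i j) + T1 (\<alpha> \<circ> Transposition.transpose k j))"
    have uts: "u \<in> tensor_space n" unfolding u_def
      by (intro ts_add ts_perm T1ts i j k)
    have e1: "Transposition.transpose i j \<circ> Transposition.transpose k j = Transposition.transpose k j \<circ> Transposition.transpose i k"
      using tp_ident[of i k j] ij kj ik by simp
    have e2: "Transposition.transpose k j \<circ> Transposition.transpose i j = Transposition.transpose i j \<circ> Transposition.transpose i k"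
      using tp_ident[of k i j] ij kj ik by (simp add: transpose_commute)
    have s1: "u \<alpha> = u (\<alpha> \<circ> Transposition.transpose i j)" if \<alpha>: "\<alpha> \<in> tuples n" for \<alpha>
    proof -
      have "T1 (\<alpha> \<circ> Transposition.transpose i j \<circ> Transposition.transpose k j) = T1 (\<alpha> \<circ> Transposition.transpose k j)"
        using T1sym[OF tp_tuples[OF k j \<alpha>]] e1 by (simp add: comp_assoc)
      moreover have "T1 (\<alpha> \<circ> Transposition.transpose i j \<circ> Transposition.transpose i j) = T1 \<alpha>"
        by (simp add: comp_assoc)
      ultimately show ?thesis unfolding u_def by simp
    qed
    have s2: "u \<alpha> = u (\<alpha> \<circ> Transposition.transpose j k)" if \<alpha>: "\<alpha> \<in> tuples n" for \<alpha>
    proof -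
      have "T1 (\<alpha> \<circ> Transposition.transpose k j \<circ> Transposition.transpose i j) = T1 (\<alpha> \<circ> Transposition.transpose i j)"
        using T1sym[OF tp_tuples[OF i j \<alpha>]] e2 by (simp add: comp_assoc)
      moreover have "T1 (\<alpha> \<circ> Transposition.transpose k j \<circ> Transposition.transpose k j) = T1 \<alpha>"
        by (simp add: comp_assoc)
      ultimately show ?thesis unfolding u_def by (simp add: transpose_commute)
    qed
    have uS: "u \<in> D2 n i j \<inter> D2 n j k"
      using uts s1 s2 D2_char[OF i j, of u] D2_char[OF j k, of u] by blast
    have "sl n j a u = (\<lambda>\<beta>. w \<beta> + E i' a w \<beta> + E k' a w \<beta>)"
    proof
      fix \<beta>
      show "sl n j a u \<beta> = w \<beta> + E i' a w \<beta> + E k' a w \<beta>"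
      proof (cases "\<beta> \<in> tuples (n-1)")
        case True
        thus ?thesis unfolding sl_def u_def T1_def E_def i'_def k'_def
          using T1_ins[OF j True] T1_ins_tp[OF j i ij True] T1_ins_tp[OF j k kj True] by simp
      next
        case False
        thus ?thesis using ts_zero_out[OF wts False] by (simp add: sl_def E_def)
      qed
    qed
    thus ?thesis using H[OF uS, of a] by simp
  qed
  show ?thesis
  proof
    fix w :: "(nat \<Rightarrow> 'i) \<Rightarrow> complex" assume w: "w \<in> D2 (n-1) (shift j i) (shift j k)"
    hence w: "w \<in> D2 (n-1) i' k'" by (simp add: i'_def k'_def)
    define Q where "Q = (\<lambda>\<beta>. E i' a w \<beta> + E k' a w \<beta>)"
    define R where "R = (\<lambda>\<beta>. if \<beta> i' = a \<and> \<beta> k' = a then w \<beta> else 0)"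
    have Q: "Q \<in> D2 (n-1) i' k'" unfolding Q_def by (rule Q_D2(1)[OF i' k' w])
    have R: "R \<in> D2 (n-1) i' k'" unfolding R_def by (rule Q_D2(2)[OF i' k' w])
    have L1: "(\<lambda>\<beta>. w \<beta> + E i' a w \<beta> + E k' a w \<beta>) \<in> T" by (rule Lw[OF w])
    have L2: "(\<lambda>\<beta>. Q \<beta> + E i' a Q \<beta> + E k' a Q \<beta>) \<in> T" by (rule Lw[OF Q])
    have L3: "(\<lambda>\<beta>. R \<beta> + E i' a R \<beta> + E k' a R \<beta>) \<in> T" by (rule Lw[OF R])
    have "(\<lambda>\<beta>. (w \<beta> + E i' a w \<beta> + E k' a w \<beta>) + ((-1/2) * (Q \<beta> + E i' a Q \<beta> + E k' a Q \<beta>)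
            + (1/3) * (R \<beta> + E i' a R \<beta> + E k' a R \<beta>))) \<in> T"
      using closedT(1,2)[OF T] L1 L2 L3 by blast
    moreover have "(\<lambda>\<beta>. (w \<beta> + E i' a w \<beta> + E k' a w \<beta>) + ((-1/2) * (Q \<beta> + E i' a Q \<beta> + E k' a Q \<beta>)
            + (1/3) * (R \<beta> + E i' a R \<beta> + E k' a R \<beta>))) = w"
      by (auto simp: fun_eq_iff Q_def R_def E_def field_simps)
    ultimately show "w \<in> T" by simp
  qed
qed

lemma core_eq: fixes T :: "((nat \<Rightarrow> 'i) \<Rightarrow> complex) set"
  assumes j: "j \<in> {1..n}" and i: "i \<in> {1..n}" and ij: "i \<noteq> j" and T: "closed_subspace (n-1) T"
    and H: "\<And>u a. u \<in> D2 n i j \<inter> D2 n j i \<Longrightarrow> sl n j a u \<in> T"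
  shows "D2 (n-1) (shift j i) (shift j i) \<subseteq> T"
proof -
  define i' where "i' = shift j i"
  have i': "i' \<in> {1..n-1}" using shift_in j i ij by (auto simp: i'_def)
  define a :: 'i where "a = undefined"
  have Lw: "(\<lambda>\<beta>. w \<beta> + E i' a w \<beta>) \<in> T" if wts: "w \<in> tensor_space (n-1)" for w
  proof -
    define T1 where "T1 = tensor_at n j (ind a) w"
    have T1ts: "T1 \<in> tensor_space n" unfolding T1_def by (rule ts_tensor_at[OF j ind_l2 wts])
    define u where "u = (\<lambda>\<alpha>. T1 \<alpha> + T1 (\<alpha> \<circ> Transposition.transpose i j))"
    have uts: "u \<in> tensor_space n" unfolding u_def
      by (intro ts_add ts_perm T1ts i j)
    have s1: "u \<alpha> = u (\<alpha> \<circ> Transposition.transpose i j)" if \<alpha>: "\<alpha> \<in> tuples n" for \<alpha>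
    proof -
      have "T1 (\<alpha> \<circ> Transposition.transpose i j \<circ> Transposition.transpose i j) = T1 \<alpha>"
        by (simp add: comp_assoc)
      thus ?thesis unfolding u_def by simp
    qed
    have uS: "u \<in> D2 n i j \<inter> D2 n j i"
      using uts s1 D2_char[OF i j, of u] D2_char[OF j i, of u] by (simp add: transpose_commute)
    have "sl n j a u = (\<lambda>\<beta>. w \<beta> + E i' a w \<beta>)"
    proof
      fix \<beta>
      show "sl n j a u \<beta> = w \<beta> + E i' a w \<beta>"
      proof (cases "\<beta> \<in> tuples (n-1)")
        case True
        thus ?thesis unfolding sl_def u_def T1_def E_def i'_def
          using T1_ins[OF j True] T1_ins_tp[OF j i ij True] by simp
      next
        case False
        thus ?thesis using ts_zero_out[OF wts False] by (simp add: sl_def E_def)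
      qed
    qed
    thus ?thesis using H[OF uS, of a] by simp
  qed
  show ?thesis
  proof
    fix w :: "(nat \<Rightarrow> 'i) \<Rightarrow> complex" assume w: "w \<in> D2 (n-1) (shift j i) (shift j i)"
    have "w \<in> D2 (n-1) i' i' \<longleftrightarrow> w \<in> tensor_space (n-1) \<and> (\<forall>\<alpha>\<in>tuples (n-1). w \<alpha> = w (\<alpha> \<circ> Transposition.transpose i' i'))"
      by (rule D2_char[OF i' i'])
    hence wts: "w \<in> tensor_space (n-1)" using w by (simp add: i'_def)
    have L1: "(\<lambda>\<beta>. w \<beta> + E i' a w \<beta>) \<in> T" by (rule Lw[OF wts])
    have L2: "(\<lambda>\<beta>. E i' a w \<beta> + E i' a (E i' a w) \<beta>) \<in> T" by (rule Lw[OF E_ts[OF wts]])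
    have "(\<lambda>\<beta>. (w \<beta> + E i' a w \<beta>) + (-1/2) * (E i' a w \<beta> + E i' a (E i' a w) \<beta>)) \<in> T"
      using closedT(1,2)[OF T] L1 L2 by blast
    moreover have "(\<lambda>\<beta>. (w \<beta> + E i' a w \<beta>) + (-1/2) * (E i' a w \<beta> + E i' a (E i' a w) \<beta>)) = w"
      by (auto simp: fun_eq_iff E_def field_simps)
    ultimately show "w \<in> T" by simp
  qed
qed



lemma closed_D2: assumes p: "p \<in> {1..m}" and q: "q \<in> {1..m}"
  shows "closed_subspace m (D2 m p q :: ((nat \<Rightarrow> 'i) \<Rightarrow> complex) set)"
  unfolding closed_subspace_def
proof (intro conjI ballI allI impI)
  let ?t = "Transposition.transpose p q"
  have ch: "\<And>v :: (nat \<Rightarrow> 'i) \<Rightarrow> complex. v \<in> D2 m p q \<longleftrightarrow> v \<in> tensor_space m \<and> (\<forall>\<alpha>\<in>tuples m. v \<alpha> = v (\<alpha> \<circ> ?t))"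
    by (rule D2_char[OF p q])
  show "(D2 m p q :: ((nat \<Rightarrow> 'i) \<Rightarrow> complex) set) \<subseteq> tensor_space m" using ch by (simp add: subset_iff)
  show "(\<lambda>_. 0) \<in> (D2 m p q :: ((nat \<Rightarrow> 'i) \<Rightarrow> complex) set)" using ch by (simp add: ts_0)
  show "(\<lambda>\<alpha>. v \<alpha> + w \<alpha>) \<in> D2 m p q" if "v \<in> D2 m p q" "w \<in> D2 m p q" for v w :: "(nat \<Rightarrow> 'i) \<Rightarrow> complex"
    using that ch by (simp add: ts_add)
  show "(\<lambda>\<alpha>. c * v \<alpha>) \<in> D2 m p q" if "v \<in> D2 m p q" for c and v :: "(nat \<Rightarrow> 'i) \<Rightarrow> complex"
    using that ch by (simp add: ts_scale)
  fix f and v :: "(nat \<Rightarrow> 'i) \<Rightarrow> complex"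
  assume f: "\<forall>k. f k \<in> D2 m p q" and v: "v \<in> tensor_space m"
    and lim: "(\<lambda>k. tnorm m (\<lambda>\<alpha>. f k \<alpha> - v \<alpha>)) \<longlonglongrightarrow> 0"
  have fts: "\<And>k. f k \<in> tensor_space m" and fs: "\<And>k \<alpha>. \<alpha> \<in> tuples m \<Longrightarrow> f k \<alpha> = f k (\<alpha> \<circ> ?t)"
    using f ch by auto
  have "v \<alpha> = v (\<alpha> \<circ> ?t)" if \<alpha>: "\<alpha> \<in> tuples m" for \<alpha>
  proof -
    have l1: "(\<lambda>k. f k \<alpha>) \<longlonglongrightarrow> v \<alpha>" by (rule pt_lim[OF fts v lim])
    have l2: "(\<lambda>k. f k (\<alpha> \<circ> ?t)) \<longlonglongrightarrow> v (\<alpha> \<circ> ?t)" by (rule pt_lim[OF fts v lim])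
    have "(\<lambda>k. f k \<alpha>) = (\<lambda>k. f k (\<alpha> \<circ> ?t))" using fs[OF \<alpha>] by auto
    thus ?thesis using l1 l2 LIMSEQ_unique by metis
  qed
  thus "v \<in> D2 m p q" using ch v by blast
qed

theorem mainTheorem14:
  fixes n i j k :: nat
  assumes "n \<ge> 2"
    and "i \<in> {1..n}" and "j \<in> {1..n}" and "k \<in> {1..n}"
    and "j \<noteq> i" and "j \<noteq> k"
  shows "is_cyl n j (D2 n i k :: ((nat \<Rightarrow> 'i) \<Rightarrow> complex) set) \<and>
         (D2 n i k :: ((nat \<Rightarrow> 'i) \<Rightarrow> complex) set) = ex_H n j (D2 n i j \<inter> D2 n j k)"
proof -
  have i: "i \<in> {1..n}" and j: "j \<in> {1..n}" and k: "k \<in> {1..n}" and ij: "i \<noteq> j" and kj: "k \<noteq> j"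
    using assms by auto
  have i': "shift j i \<in> {1..n-1}" and k': "shift j k \<in> {1..n-1}" using shift_in j i k ij kj by auto
  let ?D' = "D2 (n-1) (shift j i) (shift j k) :: ((nat \<Rightarrow> 'i) \<Rightarrow> complex) set"
  have Dc: "closed_subspace (n-1) ?D'" by (rule closed_D2[OF i' k'])
  have CSD: "(D2 n i k :: ((nat \<Rightarrow> 'i) \<Rightarrow> complex) set) = CS n j ?D'"
    by (rule CS_D2[OF j i k ij kj])
  have eq: "(D2 n i k :: ((nat \<Rightarrow> 'i) \<Rightarrow> complex) set) = cyl n j ?D'"
    using CSD cyl_eq_CS[OF j Dc] by simp
  have cyl: "is_cyl n j (D2 n i k :: ((nat \<Rightarrow> 'i) \<Rightarrow> complex) set)"
    unfolding is_cyl_def using Dc eq by blast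
  have Ssub: "D2 n i j \<inter> D2 n j k \<subseteq> (D2 n i k :: ((nat \<Rightarrow> 'i) \<Rightarrow> complex) set)"
    by (rule S_sub[OF i j k ij kj])
  have "ex_H n j (D2 n i j \<inter> D2 n j k) \<subseteq> (D2 n i k :: ((nat \<Rightarrow> 'i) \<Rightarrow> complex) set)"
    unfolding ex_H_def using cyl Ssub by blast
  moreover have "(D2 n i k :: ((nat \<Rightarrow> 'i) \<Rightarrow> complex) set) \<subseteq> ex_H n j (D2 n i j \<inter> D2 n j k)"
    unfolding ex_H_def
  proof (rule Inter_greatest)
    fix C :: "((nat \<Rightarrow> 'i) \<Rightarrow> complex) set"
    assume "C \<in> {C. is_cyl n j C \<and> D2 n i j \<inter> D2 n j k \<subseteq> C}"
    hence C: "is_cyl n j C" and SC: "D2 n i j \<inter> D2 n j k \<subseteq> C" by auto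
    from C obtain T where T: "closed_subspace (n-1) T" and CT: "C = cyl n j T" unfolding is_cyl_def by blast
    have CT': "C = CS n j T" using CT cyl_eq_CS[OF j T] by simp
    have H: "\<And>u a. u \<in> D2 n i j \<inter> D2 n j k \<Longrightarrow> sl n j a u \<in> T"
      using SC CT' by (auto simp: CS_def)
    have DT: "?D' \<subseteq> T"
    proof (cases "i = k")
      case True
      have H': "\<And>u a. u \<in> D2 n i j \<inter> D2 n j i \<Longrightarrow> sl n j a u \<in> T" using H True by simp
      show ?thesis using core_eq[OF j i ij T H'] True by simp
    next
      case False
      show ?thesis by (rule core_ne[OF j i k ij kj False T H])
    qed
    show "(D2 n i k :: ((nat \<Rightarrow> 'i) \<Rightarrow> complex) set) \<subseteq> C"
    proof
      fix v :: "(nat \<Rightarrow> 'i) \<Rightarrow> complex" assume "v \<in> (D2 n i k :: ((nat \<Rightarrow> 'i) \<Rightarrow> complex) set)"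
      hence "v \<in> CS n j ?D'" using CSD by simp
      thus "v \<in> C" using DT CT' by (auto simp: CS_def)
    qed
  qed
  ultimately show ?thesis using cyl by blast
qed

end
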